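(* For all integers $n>1$ and $i\ge1$, and every primitive $n$-th root of unity $\omega_n$, $S_n(\omega_n^i)=S_{\gcd(s_n,i)}(1)$ and $G_n(\omega_n^i)=G_{\gcd(g_n,i)}(1)$.
   Context: $\Phi_k(q)$ is the $k$-th cyclotomic polynomial. For $n>1$ let $s_n$ be the smallest prime factor of $n$ and $g_n$ the greatest prime factor of $n$. Define $S_1(q)=G_1(q)=\Phi_1(q)=q-1$, and for $n>1$, $S_n(q)=\Phi_{s_n}(q^{n/s_n})$ and $G_n(q)=\Phi_{g_n}(q^{n/g_n})$. *)

theory Defs
  imports "HOL-Computational_Algebra.Computational_Algebra" "HOL-Analysis.Analysis"
begin

definition cyclotomic :: "nat \<Rightarrow> complex poly" where
  "cyclotomic k = (\<Prod>j\<in>{j\<in>{1..k}. coprime j k}. [:- cis (2 * pi * real j / real k), 1:])"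

definition primitive_root_unity :: "nat \<Rightarrow> complex \<Rightarrow> bool" where
  "primitive_root_unity n w \<longleftrightarrow> n > 0 \<and> w ^ n = 1 \<and> (\<forall>k. 0 < k \<and> k < n \<longrightarrow> w ^ k \<noteq> 1)"

definition spf :: "nat \<Rightarrow> nat" where "spf n = Min (prime_factors n)"
definition gpf :: "nat \<Rightarrow> nat" where "gpf n = Max (prime_factors n)"

definition S_fun :: "nat \<Rightarrow> complex \<Rightarrow> complex" where
  "S_fun n q = (if n = 1 then poly (cyclotomic 1) q
                else poly (cyclotomic (spf n)) (q ^ (n div spf n)))"

definition G_fun :: "nat \<Rightarrow> complex \<Rightarrow> complex" where
  "G_fun n q = (if n = 1 then poly (cyclotomic 1) q
                else poly (cyclotomic (gpf n)) (q ^ (n div gpf n)))"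

end

theory Submission
  imports Defs
begin

lemma cyc_prime_eq:
  assumes p: "prime p"
  shows "cyclotomic p = (\<Prod>z\<in>{z. z ^ p = 1} - {1}. [:- z, 1:])"
proof -
  have pp: "p > 0" using p prime_gt_0_nat by blast
  have S: "{j\<in>{1..p}. coprime j p} = {1..<p}"
  proof safe
    fix j assume "j \<in> {1..p}" "coprime j p"
    then show "j \<in> {1..<p}" using p by (auto simp: le_less prime_gt_1_nat)
  next
    fix j assume "j \<in> {1..<p}"
    then show "coprime j p" using p
      by (metis atLeastLessThan_iff coprime_commute prime_imp_coprime dvd_imp_le not_le less_le_trans zero_less_one)
  qed auto
  have B: "bij_betw (\<lambda>k. cis (2 * pi * real k / real p)) {..<p} {z. z ^ p = 1}"
    using Complex.bij_betw_roots_unity[OF pp] .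
  have B0: "cis (2 * pi * real 0 / real p) = 1" by simp
  have "bij_betw (\<lambda>k. cis (2 * pi * real k / real p)) ({..<p} - {0}) ({z. z ^ p = 1} - {1})"
    using bij_betw_DiffI[OF B, of "{0}" "{1}"] B0 pp
    by (simp add: bij_betw_singletonI)
  moreover have "{..<p} - {0} = {1..<p}" by auto
  ultimately have B': "bij_betw (\<lambda>k. cis (2 * pi * real k / real p)) {1..<p} ({z. z ^ p = 1} - {1})"
    by simp
  show ?thesis
    unfolding cyclotomic_def S
    using prod.reindex_bij_betw[OF B', of "\<lambda>z. [:- z, 1:]"] by simp
qed

lemma roots_prod_eq:
  assumes pp: "p > 0"
  shows "(\<Prod>z\<in>{z::complex. z ^ p = 1}. [:- z, 1:]) = [:0,1:] ^ p - 1"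
    (is "?P = ?Q")
proof -
  let ?R = "{z::complex. z ^ p = 1}"
  have fin: "finite ?R" using finite_roots_unity pp by auto
  have card: "card ?R = p" using card_roots_unity_eq[OF pp] .
  have dP: "degree ?P = p"
    by (subst degree_prod_eq_sum_degree) (auto simp: card)
  have lP: "lead_coeff ?P = 1" by (simp add: lead_coeff_prod)
  have dQ: "degree ?Q \<le> p"
    by (rule degree_diff_le) (simp_all add: degree_linear_power)
  have cQ: "coeff ?Q p = 1"
    using pp by (simp add: coeff_diff coeff_linear_power)
  show ?thesis
  proof (rule poly_eqI_degree_lead_coeff[of _ p _ ?R])
    show "coeff ?P p = coeff ?Q p" using lP dP cQ by simp
  next
    fix z assume "z \<in> ?R"
    then show "poly ?P z = poly ?Q z"
      using fin by (auto simp: poly_prod intro!: prod_zero)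
  qed (use card dP dQ in auto)
qed

lemma cyc_prime_one:
  assumes p: "prime p"
  shows "poly (cyclotomic p) 1 = of_nat p"
proof -
  have pp: "p > 0" using p prime_gt_0_nat by blast
  let ?R = "{z::complex. z ^ p = 1}"
  let ?P' = "\<Prod>z\<in>?R - {1}. [:- z, 1:]"
  have fin: "finite ?R" using finite_roots_unity pp by auto
  have "?R = insert 1 (?R - {1})" by auto
  then have "(\<Prod>z\<in>?R. [:- z, 1:]) = [:-1,1:] * ?P'"
    using fin by (metis (no_types, lifting) finite_Diff prod.insert Diff_iff singletonI)
  then have "[:-1,1:] * ?P' = ([:0,1:] - 1) * (\<Sum>i<p. [:0,1:]^i)"
    using roots_prod_eq[OF pp] power_diff_1_eq by metis
  moreover have "[:0,1:] - 1 = [:-1,1::complex:]" by (simp add: one_pCons)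
  ultimately have "[:-1,1:] * ?P' = [:-1,1:] * (\<Sum>i<p. [:0,1:]^i)" by simp
  then have "?P' = (\<Sum>i<p. [:0,1:]^i)"
    by (subst (asm) mult_left_cancel) auto
  then have "poly ?P' 1 = of_nat p" by (simp add: poly_sum)
  then show ?thesis using cyc_prime_eq[OF p] by simp
qed

lemma cyc_prime_zero:
  assumes p: "prime p" and z: "z ^ p = 1" "z \<noteq> 1"
  shows "poly (cyclotomic p) z = 0"
proof -
  have pp: "p > 0" using p prime_gt_0_nat by blast
  have fin: "finite {z::complex. z ^ p = 1}" using finite_roots_unity pp by auto
  show ?thesis using cyc_prime_eq[OF p] z fin by (auto simp: poly_prod intro!: prod_zero)
qed

lemma cyc_one: "poly (cyclotomic 1) 1 = 0"
proof -
  have "{j\<in>{1..1::nat}. coprime j 1} = {1}" by auto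
  then show ?thesis by (simp add: cyclotomic_def)
qed


lemma prim_dvd:
  assumes "primitive_root_unity n w" "w ^ k = 1"
  shows "n dvd k"
proof -
  have n: "n > 0" "w ^ n = 1" "\<forall>k. 0 < k \<and> k < n \<longrightarrow> w ^ k \<noteq> 1"
    using assms(1) unfolding primitive_root_unity_def by auto
  have "w ^ k = w ^ (n * (k div n) + k mod n)" by simp
  also have "\<dots> = (w ^ n) ^ (k div n) * w ^ (k mod n)"
    by (simp only: power_add power_mult)
  finally have "w ^ k = (w ^ n) ^ (k div n) * w ^ (k mod n)" .
  then have "w ^ (k mod n) = 1" using assms(2) n(2) by simp
  moreover have "k mod n < n" using n(1) by simp
  ultimately have "k mod n = 0" using n(3) by (metis neq0_conv)
  then show ?thesis by auto
qed

lemma key: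
  assumes w: "primitive_root_unity n w" and p: "p \<in> prime_factors n"
  shows "poly (cyclotomic p) ((w ^ i) ^ (n div p)) = (if p dvd i then of_nat p else 0)"
proof -
  have pr: "prime p" and pd: "p dvd n" using p by auto
  have n: "n > 0" "w ^ n = 1" using w unfolding primitive_root_unity_def by auto
  define m where "m = n div p"
  have nm: "n = m * p" using pd m_def by simp
  have m0: "m > 0" using n nm by (cases m) auto
  have zp: "((w ^ i) ^ m) ^ p = 1"
  proof -
    have "((w ^ i) ^ m) ^ p = w ^ (i * m * p)" by (simp only: power_mult)
    also have "i * m * p = m * p * i" by simp
    also have "w ^ (m * p * i) = (w ^ n) ^ i" by (simp only: nm power_mult)
    finally show ?thesis using n by simp
  qed
  show ?thesis
  proof (cases "p dvd i")
    case True
    then obtain k where "i = p * k" by blast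
    then have "(w ^ i) ^ m = w ^ (p * k * m)" by (simp only: power_mult)
    also have "p * k * m = m * p * k" by simp
    also have "w ^ (m * p * k) = (w ^ n) ^ k" by (simp only: nm power_mult)
    finally have "(w ^ i) ^ m = (w ^ n) ^ k" .
    then have "(w ^ i) ^ m = 1" using n by simp
    then show ?thesis using True cyc_prime_one[OF pr] m_def by simp
  next
    case False
    have "(w ^ i) ^ m \<noteq> 1"
    proof
      assume "(w ^ i) ^ m = 1"
      then have "w ^ (i * m) = 1" by (simp add: power_mult)
      then have "m * p dvd m * i" using prim_dvd[OF w] nm by (simp add: mult.commute)
      then have "p dvd i" using m0 by simp
      then show False using False by simp
    qed
    then show ?thesis using False cyc_prime_zero[OF pr zp] m_def by simp
  qed
qed


lemma prime_pf: "prime (p::nat) \<Longrightarrow> spf p = p \<and> gpf p = p"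
  by (simp add: spf_def gpf_def prime_prime_factors)

lemma rhs:
  assumes "prime (p::nat)"
  shows "S_fun (gcd p i) 1 = (if p dvd i then of_nat p else 0) \<and>
         G_fun (gcd p i) 1 = (if p dvd i then of_nat p else 0)"
proof (cases "p dvd i")
  case True
  then have "gcd p i = p" by (simp add: gcd_nat.absorb1)
  moreover have "p \<noteq> 1" using assms by auto
  ultimately show ?thesis using True prime_pf[OF assms] cyc_prime_one[OF assms]
    by (simp add: S_fun_def G_fun_def)
next
  case False
  then have "coprime p i" using assms prime_imp_coprime by blast
  then have "gcd p i = 1" by simp
  then show ?thesis using False cyc_one by (simp add: S_fun_def G_fun_def)
qed

theorem theorem12:
  fixes n i :: nat and w :: complex
  assumes "n > 1" and "i \<ge> 1" and "primitive_root_unity n w"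
  shows "S_fun n (w ^ i) = S_fun (gcd (spf n) i) 1 \<and> G_fun n (w ^ i) = G_fun (gcd (gpf n) i) 1"
proof -
  have "prime_factorization n \<noteq> {#}" using assms(1)
    by (simp add: prime_factorization_empty_iff)
  then have ne: "prime_factors n \<noteq> {}" by simp
  have s: "spf n \<in> prime_factors n" unfolding spf_def using ne by (intro Min_in) auto
  have g: "gpf n \<in> prime_factors n" unfolding gpf_def using ne by (intro Max_in) auto
  have ps: "prime (spf n)" and pg: "prime (gpf n)" using s g by auto
  have n1: "n \<noteq> 1" using assms(1) by simp
  have "S_fun n (w ^ i) = poly (cyclotomic (spf n)) ((w ^ i) ^ (n div spf n))"
    using n1 by (simp add: S_fun_def)
  also have "\<dots> = S_fun (gcd (spf n) i) 1"
    using key[OF assms(3) s, of i] rhs[OF ps, of i] by simp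
  finally have 1: "S_fun n (w ^ i) = S_fun (gcd (spf n) i) 1" .
  have "G_fun n (w ^ i) = poly (cyclotomic (gpf n)) ((w ^ i) ^ (n div gpf n))"
    using n1 by (simp add: G_fun_def)
  also have "\<dots> = G_fun (gcd (gpf n) i) 1"
    using key[OF assms(3) g, of i] rhs[OF pg, of i] by simp
  finally have 2: "G_fun n (w ^ i) = G_fun (gcd (gpf n) i) 1" .
  show ?thesis using 1 2 by simp
qed

end
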